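(* Let $S,T$ be semirings, $G$ a $(T,S)$-bisemimodule, and let $0\to L\xrightarrow{f}M\xrightarrow{g}N$ be a sequence of left $T$-semimodules, with induced sequence of left $S$-semimodules $0\to\mathrm{Hom}_T(G,L)\xrightarrow{(G,f)}\mathrm{Hom}_T(G,M)\xrightarrow{(G,g)}\mathrm{Hom}_T(G,N)$, where $(G,f)(\varphi)=f\circ\varphi$ and $(G,g)(\psi)=g\circ\psi$. (1) If $0\to L\xrightarrow{f}M$ is exact (i.e. $f$ is injective) and $f$ is normal, then $0\to\mathrm{Hom}_T(G,L)\xrightarrow{(G,f)}\mathrm{Hom}_T(G,M)$ is exact (i.e. $(G,f)$ is injective) and $(G,f)$ is normal. (2) If $0\to L\xrightarrow{f}M\xrightarrow{g}N$ is semi-exact and $f$ is normal, then $0\to\mathrm{Hom}_T(G,L)\to\mathrm{Hom}_T(G,M)\to\mathrm{Hom}_T(G,N)$ is proper-exact (and hence semi-exact) and $(G,f)$ is normal. (3) If $0\to L\xrightarrow{f}M\xrightarrow{g}N$ is exact and $\mathrm{Hom}_T(G,-)$ preserves $k$-normal morphisms, then $0\to\mathrm{Hom}_T(G,L)\to\mathrm{Hom}_T(G,M)\to\mathrm{Hom}_T(G,N)$ is exact.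
   Context: A semiring $(S,+,0,\cdot,1)$ consists of a commutative monoid $(S,+,0)$ and a monoid $(S,\cdot,1)$ with $0\neq 1$, absorbing zero and both distributive laws; semimodules are as modules over rings without subtraction. $\mathrm{Hom}_T(G,X)$ is a left $S$-semimodule via pointwise addition and $(s\varphi)(x)=\varphi(xs)$. For a linear map $h:X\to Y$: $\mathrm{Ker}(h)=\{x\mid h(x)=0\}$; for $A\subseteq Y$, $\overline{A}=\{y\in Y\mid y+a=a'\text{ for some }a,a'\in A\}$; $h$ is $k$-normal if $h(x)=h(x')$ implies $x+k=x'+k'$ for some $k,k'\in\mathrm{Ker}(h)$; $h$ is $i$-normal if $h(X)=\overline{h(X)}$; $h$ is normal if both. A sequence $X\xrightarrow{u}Y\xrightarrow{v}Z$ is exact if $v$ is $k$-normal and $u(X)=\mathrm{Ker}(v)$; proper-exact if $u(X)=\mathrm{Ker}(v)$; semi-exact if $\overline{u(X)}=\mathrm{Ker}(v)$. A longer sequence is exact (resp. proper-exact, semi-exact) if each consecutive three-term piece is; a leading $0$ denotes the zero semimodule with the zero map. *)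

theory Defs
  imports Main
begin

record ('r, 'a) lsmod =
  mcarrier :: "'a set"
  madd :: "'a \<Rightarrow> 'a \<Rightarrow> 'a"
  mzero :: 'a
  msmult :: "'r \<Rightarrow> 'a \<Rightarrow> 'a"

definition left_semimodule :: "('r::semiring_1, 'a) lsmod \<Rightarrow> bool" where
  "left_semimodule X \<longleftrightarrow>
     mzero X \<in> mcarrier X \<and>
     (\<forall>x\<in>mcarrier X. \<forall>y\<in>mcarrier X. madd X x y \<in> mcarrier X) \<and>
     (\<forall>r. \<forall>x\<in>mcarrier X. msmult X r x \<in> mcarrier X) \<and>
     (\<forall>x\<in>mcarrier X. \<forall>y\<in>mcarrier X. \<forall>z\<in>mcarrier X.
        madd X (madd X x y) z = madd X x (madd X y z)) \<and>
     (\<forall>x\<in>mcarrier X. \<forall>y\<in>mcarrier X. madd X x y = madd X y x) \<and>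
     (\<forall>x\<in>mcarrier X. madd X (mzero X) x = x) \<and>
     (\<forall>r s. \<forall>x\<in>mcarrier X. msmult X (r * s) x = msmult X r (msmult X s x)) \<and>
     (\<forall>x\<in>mcarrier X. msmult X 1 x = x) \<and>
     (\<forall>r. \<forall>x\<in>mcarrier X. \<forall>y\<in>mcarrier X.
        msmult X r (madd X x y) = madd X (msmult X r x) (msmult X r y)) \<and>
     (\<forall>r s. \<forall>x\<in>mcarrier X. msmult X (r + s) x = madd X (msmult X r x) (msmult X s x)) \<and>
     (\<forall>x\<in>mcarrier X. msmult X 0 x = mzero X) \<and>
     (\<forall>r. msmult X r (mzero X) = mzero X)"

definition bisemimodule :: "('t::semiring_1, 'g) lsmod \<Rightarrow> ('g \<Rightarrow> 's::semiring_1 \<Rightarrow> 'g) \<Rightarrow> bool" where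
  "bisemimodule G rs \<longleftrightarrow>
     left_semimodule G \<and>
     (\<forall>s. \<forall>x\<in>mcarrier G. rs x s \<in> mcarrier G) \<and>
     (\<forall>s s'. \<forall>x\<in>mcarrier G. rs (rs x s) s' = rs x (s * s')) \<and>
     (\<forall>x\<in>mcarrier G. rs x 1 = x) \<and>
     (\<forall>s. \<forall>x\<in>mcarrier G. \<forall>y\<in>mcarrier G. rs (madd G x y) s = madd G (rs x s) (rs y s)) \<and>
     (\<forall>s s'. \<forall>x\<in>mcarrier G. rs x (s + s') = madd G (rs x s) (rs x s')) \<and>
     (\<forall>x\<in>mcarrier G. rs x 0 = mzero G) \<and>
     (\<forall>s. rs (mzero G) s = mzero G) \<and>
     (\<forall>t s. \<forall>x\<in>mcarrier G. rs (msmult G t x) s = msmult G t (rs x s))"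

definition linear_map :: "('r::semiring_1, 'a) lsmod \<Rightarrow> ('r, 'b) lsmod \<Rightarrow> ('a \<Rightarrow> 'b) \<Rightarrow> bool" where
  "linear_map X Y h \<longleftrightarrow>
     (\<forall>x\<in>mcarrier X. h x \<in> mcarrier Y) \<and>
     (\<forall>x\<in>mcarrier X. \<forall>y\<in>mcarrier X. h (madd X x y) = madd Y (h x) (h y)) \<and>
     (\<forall>r. \<forall>x\<in>mcarrier X. h (msmult X r x) = msmult Y r (h x))"

text \<open>Hom_T(G,X) as a left S-semimodule; maps are extensional (undefined off carrier G).\<close>

definition Hom_mod :: "('t::semiring_1, 'g) lsmod \<Rightarrow> ('g \<Rightarrow> 's::semiring_1 \<Rightarrow> 'g)
    \<Rightarrow> ('t, 'x) lsmod \<Rightarrow> ('s, 'g \<Rightarrow> 'x) lsmod" where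
  "Hom_mod G rs X =
     \<lparr> mcarrier = {\<phi>. linear_map G X \<phi> \<and> (\<forall>x. x \<notin> mcarrier G \<longrightarrow> \<phi> x = undefined)},
       madd = (\<lambda>\<phi> \<psi> x. if x \<in> mcarrier G then madd X (\<phi> x) (\<psi> x) else undefined),
       mzero = (\<lambda>x. if x \<in> mcarrier G then mzero X else undefined),
       msmult = (\<lambda>s \<phi> x. if x \<in> mcarrier G then \<phi> (rs x s) else undefined) \<rparr>"

definition Hom_map :: "('t, 'g) lsmod \<Rightarrow> ('x \<Rightarrow> 'y) \<Rightarrow> ('g \<Rightarrow> 'x) \<Rightarrow> ('g \<Rightarrow> 'y)" where
  "Hom_map G h = (\<lambda>\<phi> x. if x \<in> mcarrier G then h (\<phi> x) else undefined)"

definition Ker :: "('r, 'a) lsmod \<Rightarrow> ('r, 'b) lsmod \<Rightarrow> ('a \<Rightarrow> 'b) \<Rightarrow> 'a set" where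
  "Ker X Y h = {x \<in> mcarrier X. h x = mzero Y}"

definition sclosure :: "('r, 'a) lsmod \<Rightarrow> 'a set \<Rightarrow> 'a set" where
  "sclosure Y A = {y \<in> mcarrier Y. \<exists>a\<in>A. \<exists>a'\<in>A. madd Y y a = a'}"

definition k_normal :: "('r, 'a) lsmod \<Rightarrow> ('r, 'b) lsmod \<Rightarrow> ('a \<Rightarrow> 'b) \<Rightarrow> bool" where
  "k_normal X Y h \<longleftrightarrow>
     (\<forall>x\<in>mcarrier X. \<forall>x'\<in>mcarrier X. h x = h x' \<longrightarrow>
        (\<exists>k\<in>Ker X Y h. \<exists>k'\<in>Ker X Y h. madd X x k = madd X x' k'))"

definition i_normal :: "('r, 'a) lsmod \<Rightarrow> ('r, 'b) lsmod \<Rightarrow> ('a \<Rightarrow> 'b) \<Rightarrow> bool" where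
  "i_normal X Y h \<longleftrightarrow> h ` mcarrier X = sclosure Y (h ` mcarrier X)"

definition normal_map :: "('r, 'a) lsmod \<Rightarrow> ('r, 'b) lsmod \<Rightarrow> ('a \<Rightarrow> 'b) \<Rightarrow> bool" where
  "normal_map X Y h \<longleftrightarrow> k_normal X Y h \<and> i_normal X Y h"

definition exact3 :: "('r, 'a) lsmod \<Rightarrow> ('r, 'b) lsmod \<Rightarrow> ('r, 'c) lsmod
    \<Rightarrow> ('a \<Rightarrow> 'b) \<Rightarrow> ('b \<Rightarrow> 'c) \<Rightarrow> bool" where
  "exact3 X Y Z u v \<longleftrightarrow> k_normal Y Z v \<and> u ` mcarrier X = Ker Y Z v"

definition proper_exact3 :: "('r, 'a) lsmod \<Rightarrow> ('r, 'b) lsmod \<Rightarrow> ('r, 'c) lsmod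
    \<Rightarrow> ('a \<Rightarrow> 'b) \<Rightarrow> ('b \<Rightarrow> 'c) \<Rightarrow> bool" where
  "proper_exact3 X Y Z u v \<longleftrightarrow> u ` mcarrier X = Ker Y Z v"

definition semi_exact3 :: "('r, 'a) lsmod \<Rightarrow> ('r, 'b) lsmod \<Rightarrow> ('r, 'c) lsmod
    \<Rightarrow> ('a \<Rightarrow> 'b) \<Rightarrow> ('b \<Rightarrow> 'c) \<Rightarrow> bool" where
  "semi_exact3 X Y Z u v \<longleftrightarrow> sclosure Y (u ` mcarrier X) = Ker Y Z v"

definition zmod :: "('r, 'a) lsmod \<Rightarrow> ('r, 'a) lsmod" where
  "zmod X = \<lparr> mcarrier = {mzero X}, madd = (\<lambda>_ _. mzero X), mzero = mzero X,
              msmult = (\<lambda>_ _. mzero X) \<rparr>"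

definition zmap :: "('r, 'a) lsmod \<Rightarrow> 'a \<Rightarrow> 'a" where
  "zmap X = (\<lambda>_. mzero X)"

definition exact_0LM :: "('r, 'a) lsmod \<Rightarrow> ('r, 'b) lsmod \<Rightarrow> ('a \<Rightarrow> 'b) \<Rightarrow> bool" where
  "exact_0LM L M f \<longleftrightarrow> exact3 (zmod L) L M (zmap L) f"

definition exact_0LMN :: "('r, 'a) lsmod \<Rightarrow> ('r, 'b) lsmod \<Rightarrow> ('r, 'c) lsmod
    \<Rightarrow> ('a \<Rightarrow> 'b) \<Rightarrow> ('b \<Rightarrow> 'c) \<Rightarrow> bool" where
  "exact_0LMN L M N f g \<longleftrightarrow> exact3 (zmod L) L M (zmap L) f \<and> exact3 L M N f g"

definition proper_exact_0LMN :: "('r, 'a) lsmod \<Rightarrow> ('r, 'b) lsmod \<Rightarrow> ('r, 'c) lsmod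
    \<Rightarrow> ('a \<Rightarrow> 'b) \<Rightarrow> ('b \<Rightarrow> 'c) \<Rightarrow> bool" where
  "proper_exact_0LMN L M N f g \<longleftrightarrow>
     proper_exact3 (zmod L) L M (zmap L) f \<and> proper_exact3 L M N f g"

definition semi_exact_0LMN :: "('r, 'a) lsmod \<Rightarrow> ('r, 'b) lsmod \<Rightarrow> ('r, 'c) lsmod
    \<Rightarrow> ('a \<Rightarrow> 'b) \<Rightarrow> ('b \<Rightarrow> 'c) \<Rightarrow> bool" where
  "semi_exact_0LMN L M N f g \<longleftrightarrow>
     semi_exact3 (zmod L) L M (zmap L) f \<and> semi_exact3 L M N f g"

end

theory Submission
  imports Defs
begin
lemma lsm_zero: "left_semimodule X \<Longrightarrow> mzero X \<in> mcarrier X"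
  by (simp add: left_semimodule_def)
lemma lsm_add0: "left_semimodule X \<Longrightarrow> x \<in> mcarrier X \<Longrightarrow> madd X (mzero X) x = x"
  unfolding left_semimodule_def by blast
lemma lsm_add0r: assumes "left_semimodule X" "x \<in> mcarrier X" shows "madd X x (mzero X) = x"
proof -
  have "madd X x (mzero X) = madd X (mzero X) x" using assms unfolding left_semimodule_def by blast
  then show ?thesis using assms lsm_add0 by metis
qed

lemma lin_zero:
  assumes "left_semimodule X" "left_semimodule Y" "linear_map X Y h"
  shows "h (mzero X) = mzero Y"
proof -
  have z: "mzero X \<in> mcarrier X" using assms(1) by (simp add: left_semimodule_def)
  have "mzero X = msmult X 0 (mzero X)" using assms(1) by (simp add: left_semimodule_def)
  then have "h (mzero X) = msmult Y 0 (h (mzero X))" using assms(3) z unfolding linear_map_def by metis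
  also have "\<dots> = mzero Y" using assms(2,3) z by (simp add: left_semimodule_def linear_map_def)
  finally show ?thesis .
qed

lemma inj_from:
  assumes "left_semimodule L" "k_normal L M f" "Ker L M f = {mzero L}"
  shows "inj_on f (mcarrier L)"
proof (rule inj_onI)
  fix x y assume xy: "x \<in> mcarrier L" "y \<in> mcarrier L" "f x = f y"
  then obtain k k' where "k \<in> Ker L M f" "k' \<in> Ker L M f" "madd L x k = madd L y k'"
    using assms(2) unfolding k_normal_def by blast
  then show "x = y" using assms(3) lsm_add0r[OF assms(1)] xy by auto
qed

lemma bis_lsm: "bisemimodule G rs \<Longrightarrow> left_semimodule G"
  by (simp add: bisemimodule_def)

lemma hom_zero:
  assumes "left_semimodule G" "left_semimodule X"
  shows "mzero (Hom_mod G rs X) \<in> mcarrier (Hom_mod G rs X)"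
  using assms unfolding Hom_mod_def linear_map_def left_semimodule_def by auto

lemma hom_mem: "\<phi> \<in> mcarrier (Hom_mod G rs X) \<longleftrightarrow>
   linear_map G X \<phi> \<and> (\<forall>x. x \<notin> mcarrier G \<longrightarrow> \<phi> x = undefined)"
  by (simp add: Hom_mod_def)

lemma hom_map_mem:
  assumes "left_semimodule G" "linear_map L M f" "\<phi> \<in> mcarrier (Hom_mod G rs L)"
  shows "Hom_map G f \<phi> \<in> mcarrier (Hom_mod G rs M)"
  using assms unfolding hom_mem Hom_map_def linear_map_def left_semimodule_def by auto

lemma hom_ext:
  assumes "\<phi> \<in> mcarrier (Hom_mod G rs X)" "\<psi> \<in> mcarrier (Hom_mod G rs X)"
    "\<And>x. x \<in> mcarrier G \<Longrightarrow> \<phi> x = \<psi> x"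
  shows "\<phi> = \<psi>"
  using assms unfolding hom_mem by (metis ext)

lemma hom_add0r:
  assumes "left_semimodule X" "\<phi> \<in> mcarrier (Hom_mod G rs X)"
  shows "madd (Hom_mod G rs X) \<phi> (mzero (Hom_mod G rs X)) = \<phi>"
proof
  fix x show "madd (Hom_mod G rs X) \<phi> (mzero (Hom_mod G rs X)) x = \<phi> x"
    using assms lsm_add0r[OF assms(1)] unfolding Hom_mod_def linear_map_def by auto
qed

lemma hom_map_inj:
  assumes "inj_on f (mcarrier L)"
  shows "inj_on (Hom_map G f) (mcarrier (Hom_mod G rs L))"
proof (rule inj_onI)
  fix \<phi> \<psi> assume a: "\<phi> \<in> mcarrier (Hom_mod G rs L)" "\<psi> \<in> mcarrier (Hom_mod G rs L)"
    "Hom_map G f \<phi> = Hom_map G f \<psi>"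
  show "\<phi> = \<psi>"
  proof (rule hom_ext[OF a(1,2)])
    fix x assume x: "x \<in> mcarrier G"
    have "f (\<phi> x) = f (\<psi> x)" using fun_cong[OF a(3), of x] x by (simp add: Hom_map_def)
    moreover have "\<phi> x \<in> mcarrier L" "\<psi> x \<in> mcarrier L" using a x by (auto simp: hom_mem linear_map_def)
    ultimately show "\<phi> x = \<psi> x" using assms by (auto dest: inj_onD)
  qed
qed

lemma inj_knormal:
  assumes "left_semimodule X" "left_semimodule Y" "linear_map X Y h" "inj_on h (mcarrier X)"
  shows "k_normal X Y h"
  unfolding k_normal_def
proof (intro ballI impI)
  fix x x' assume "x \<in> mcarrier X" "x' \<in> mcarrier X" "h x = h x'"
  then have "x = x'" using assms(4) by (auto dest: inj_onD)
  moreover have "mzero X \<in> Ker X Y h" using lin_zero[OF assms(1-3)] lsm_zero[OF assms(1)] by (simp add: Ker_def)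
  ultimately show "\<exists>k\<in>Ker X Y h. \<exists>k'\<in>Ker X Y h. madd X x k = madd X x' k'" by blast
qed


lemma lift:
  assumes G: "left_semimodule G" and L: "left_semimodule L" and M: "left_semimodule M"
    and f: "linear_map L M f" and inj: "inj_on f (mcarrier L)"
    and psi: "\<psi> \<in> mcarrier (Hom_mod G rs M)" and im: "\<forall>x\<in>mcarrier G. \<psi> x \<in> f ` mcarrier L"
  shows "\<exists>\<phi>\<in>mcarrier (Hom_mod G rs L). Hom_map G f \<phi> = \<psi>"
proof -
  define \<phi> where "\<phi> x = (if x \<in> mcarrier G then the_inv_into (mcarrier L) f (\<psi> x) else undefined)" for x
  have fphi: "f (\<phi> x) = \<psi> x" if "x \<in> mcarrier G" for x
    using that im inj by (simp add: \<phi>_def f_the_inv_into_f)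
  have phiL: "\<phi> x \<in> mcarrier L" if "x \<in> mcarrier G" for x
    using that im inj by (auto simp: \<phi>_def the_inv_into_into)
  have psilin: "linear_map G M \<psi>" and psiout: "\<And>x. x \<notin> mcarrier G \<Longrightarrow> \<psi> x = undefined"
    using psi by (auto simp: hom_mem)
  have Gadd: "madd G x y \<in> mcarrier G" if "x \<in> mcarrier G" "y \<in> mcarrier G" for x y
    using G that by (simp add: left_semimodule_def)
  have Gsm: "msmult G r x \<in> mcarrier G" if "x \<in> mcarrier G" for x r
    using G that by (simp add: left_semimodule_def)
  have Ladd: "madd L x y \<in> mcarrier L" if "x \<in> mcarrier L" "y \<in> mcarrier L" for x y
    using L that by (simp add: left_semimodule_def)
  have Lsm: "msmult L r x \<in> mcarrier L" if "x \<in> mcarrier L" for x r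
    using L that by (simp add: left_semimodule_def)
  have "linear_map G L \<phi>"
    unfolding linear_map_def
  proof (intro conjI ballI allI)
    fix x assume "x \<in> mcarrier G" then show "\<phi> x \<in> mcarrier L" by (rule phiL)
  next
    fix x y assume xy: "x \<in> mcarrier G" "y \<in> mcarrier G"
    have "f (\<phi> (madd G x y)) = \<psi> (madd G x y)" using fphi Gadd xy by blast
    also have "\<dots> = madd M (\<psi> x) (\<psi> y)" using psilin xy unfolding linear_map_def by blast
    also have "\<dots> = madd M (f (\<phi> x)) (f (\<phi> y))" using fphi xy by simp
    also have "\<dots> = f (madd L (\<phi> x) (\<phi> y))" using f phiL xy unfolding linear_map_def by metis
    finally show "\<phi> (madd G x y) = madd L (\<phi> x) (\<phi> y)"
      using inj phiL Gadd xy Ladd by (meson inj_onD)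
  next
    fix r x assume x: "x \<in> mcarrier G"
    have "f (\<phi> (msmult G r x)) = \<psi> (msmult G r x)" using fphi Gsm x by blast
    also have "\<dots> = msmult M r (\<psi> x)" using psilin x unfolding linear_map_def by blast
    also have "\<dots> = msmult M r (f (\<phi> x))" using fphi x by simp
    also have "\<dots> = f (msmult L r (\<phi> x))" using f phiL x unfolding linear_map_def by metis
    finally show "\<phi> (msmult G r x) = msmult L r (\<phi> x)"
      using inj phiL Gsm x Lsm by (meson inj_onD)
  qed
  then have "\<phi> \<in> mcarrier (Hom_mod G rs L)" by (simp add: hom_mem \<phi>_def)
  moreover have "Hom_map G f \<phi> = \<psi>"
  proof
    fix x show "Hom_map G f \<phi> x = \<psi> x" using fphi psiout by (simp add: Hom_map_def)
  qed
  ultimately show ?thesis by blast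
qed

lemma hom_map_zero:
  assumes "left_semimodule L" "left_semimodule M" "linear_map L M f"
  shows "Hom_map G f (mzero (Hom_mod G rs L)) = mzero (Hom_mod G rs M)"
  using lin_zero[OF assms] by (auto simp: Hom_map_def Hom_mod_def)

lemma hom_ker:
  assumes G: "left_semimodule G" and L: "left_semimodule L" and M: "left_semimodule M"
    and f: "linear_map L M f" and K: "Ker L M f = {mzero L}"
  shows "Ker (Hom_mod G rs L) (Hom_mod G rs M) (Hom_map G f) = {mzero (Hom_mod G rs L)}"
proof
  show "Ker (Hom_mod G rs L) (Hom_mod G rs M) (Hom_map G f) \<subseteq> {mzero (Hom_mod G rs L)}"
  proof
    fix \<phi> assume a: "\<phi> \<in> Ker (Hom_mod G rs L) (Hom_mod G rs M) (Hom_map G f)"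
    then have p: "\<phi> \<in> mcarrier (Hom_mod G rs L)" and e: "Hom_map G f \<phi> = mzero (Hom_mod G rs M)"
      by (auto simp: Ker_def)
    have "\<phi> = mzero (Hom_mod G rs L)"
    proof (rule hom_ext[OF p hom_zero[OF G L]])
      fix x assume x: "x \<in> mcarrier G"
      have "f (\<phi> x) = mzero M" using fun_cong[OF e, of x] x by (simp add: Hom_map_def Hom_mod_def)
      moreover have "\<phi> x \<in> mcarrier L" using p x by (auto simp: hom_mem linear_map_def)
      ultimately have "\<phi> x \<in> Ker L M f" by (simp add: Ker_def)
      then show "\<phi> x = mzero (Hom_mod G rs L) x" using K x by (simp add: Hom_mod_def)
    qed
    then show "\<phi> \<in> {mzero (Hom_mod G rs L)}" by simp
  qed
  show "{mzero (Hom_mod G rs L)} \<subseteq> Ker (Hom_mod G rs L) (Hom_mod G rs M) (Hom_map G f)"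
    using hom_zero[OF G L, of rs] hom_map_zero[OF L M f, of G rs] by (simp add: Ker_def)
qed

lemma hom_inormal:
  assumes G: "left_semimodule G" and L: "left_semimodule L" and M: "left_semimodule M"
    and f: "linear_map L M f" and inj: "inj_on f (mcarrier L)" and inorm: "i_normal L M f"
  shows "i_normal (Hom_mod G rs L) (Hom_mod G rs M) (Hom_map G f)"
  unfolding i_normal_def
proof
  let ?I = "Hom_map G f ` mcarrier (Hom_mod G rs L)"
  have z: "mzero (Hom_mod G rs M) \<in> ?I"
    using hom_zero[OF G L, of rs] hom_map_zero[OF L M f, of G rs] by (metis image_eqI)
  show "?I \<subseteq> sclosure (Hom_mod G rs M) ?I"
  proof
    fix \<psi> assume a: "\<psi> \<in> ?I"
    then have p: "\<psi> \<in> mcarrier (Hom_mod G rs M)" using hom_map_mem[OF G f] by blast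
    show "\<psi> \<in> sclosure (Hom_mod G rs M) ?I"
      unfolding sclosure_def using p a z hom_add0r[OF M p] by blast
  qed
  show "sclosure (Hom_mod G rs M) ?I \<subseteq> ?I"
  proof
    fix \<psi> assume "\<psi> \<in> sclosure (Hom_mod G rs M) ?I"
    then obtain \<phi>1 \<phi>2 where p: "\<psi> \<in> mcarrier (Hom_mod G rs M)" and
      p1: "\<phi>1 \<in> mcarrier (Hom_mod G rs L)" and p2: "\<phi>2 \<in> mcarrier (Hom_mod G rs L)" and
      e: "madd (Hom_mod G rs M) \<psi> (Hom_map G f \<phi>1) = Hom_map G f \<phi>2"
      unfolding sclosure_def by blast
    have "\<forall>x\<in>mcarrier G. \<psi> x \<in> f ` mcarrier L"
    proof
      fix x assume x: "x \<in> mcarrier G"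
      have "madd M (\<psi> x) (f (\<phi>1 x)) = f (\<phi>2 x)"
        using fun_cong[OF e, of x] x by (simp add: Hom_map_def Hom_mod_def)
      moreover have "\<phi>1 x \<in> mcarrier L" "\<phi>2 x \<in> mcarrier L" "\<psi> x \<in> mcarrier M"
        using p p1 p2 x by (auto simp: hom_mem linear_map_def)
      ultimately have "\<psi> x \<in> sclosure M (f ` mcarrier L)" unfolding sclosure_def by blast
      then show "\<psi> x \<in> f ` mcarrier L" using inorm by (simp add: i_normal_def)
    qed
    then show "\<psi> \<in> ?I" using lift[OF G L M f inj p] by blast
  qed
qed

lemma hom_im_ker:
  assumes G: "left_semimodule G" and L: "left_semimodule L" and M: "left_semimodule M"
    and N: "left_semimodule N"
    and f: "linear_map L M f" and g: "linear_map M N g" and inj: "inj_on f (mcarrier L)"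
    and ex: "f ` mcarrier L = Ker M N g"
  shows "Hom_map G f ` mcarrier (Hom_mod G rs L) = Ker (Hom_mod G rs M) (Hom_mod G rs N) (Hom_map G g)"
proof
  show "Hom_map G f ` mcarrier (Hom_mod G rs L) \<subseteq> Ker (Hom_mod G rs M) (Hom_mod G rs N) (Hom_map G g)"
  proof
    fix \<psi> assume "\<psi> \<in> Hom_map G f ` mcarrier (Hom_mod G rs L)"
    then obtain \<phi> where p: "\<phi> \<in> mcarrier (Hom_mod G rs L)" and e: "\<psi> = Hom_map G f \<phi>" by blast
    have "Hom_map G g \<psi> = mzero (Hom_mod G rs N)"
    proof
      fix x show "Hom_map G g \<psi> x = mzero (Hom_mod G rs N) x"
      proof (cases "x \<in> mcarrier G")
        case True
        then have "\<phi> x \<in> mcarrier L" using p by (auto simp: hom_mem linear_map_def)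
        then have "f (\<phi> x) \<in> Ker M N g" using ex by blast
        then show ?thesis using True e by (simp add: Hom_map_def Hom_mod_def Ker_def)
      qed (simp add: Hom_map_def Hom_mod_def)
    qed
    then show "\<psi> \<in> Ker (Hom_mod G rs M) (Hom_mod G rs N) (Hom_map G g)"
      using hom_map_mem[OF G f p] e by (simp add: Ker_def)
  qed
  show "Ker (Hom_mod G rs M) (Hom_mod G rs N) (Hom_map G g) \<subseteq> Hom_map G f ` mcarrier (Hom_mod G rs L)"
  proof
    fix \<psi> assume "\<psi> \<in> Ker (Hom_mod G rs M) (Hom_mod G rs N) (Hom_map G g)"
    then have p: "\<psi> \<in> mcarrier (Hom_mod G rs M)" and e: "Hom_map G g \<psi> = mzero (Hom_mod G rs N)"
      by (auto simp: Ker_def)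
    have "\<forall>x\<in>mcarrier G. \<psi> x \<in> f ` mcarrier L"
    proof
      fix x assume x: "x \<in> mcarrier G"
      have "g (\<psi> x) = mzero N" using fun_cong[OF e, of x] x by (simp add: Hom_map_def Hom_mod_def)
      moreover have "\<psi> x \<in> mcarrier M" using p x by (auto simp: hom_mem linear_map_def)
      ultimately show "\<psi> x \<in> f ` mcarrier L" using ex by (simp add: Ker_def)
    qed
    then show "\<psi> \<in> Hom_map G f ` mcarrier (Hom_mod G rs L)" using lift[OF G L M f inj p] by blast
  qed
qed

lemma zimg: "zmap X ` mcarrier (zmod X) = {mzero X}"
  by (simp add: zmap_def zmod_def)

lemma sclos_zero:
  assumes "left_semimodule X" shows "sclosure X {mzero X} = {mzero X}"
  using lsm_add0r[OF assms] lsm_zero[OF assms] unfolding sclosure_def by auto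

theorem mainTheorem5:
  fixes G :: "('t::semiring_1, 'g) lsmod"
    and rs :: "'g \<Rightarrow> 's::semiring_1 \<Rightarrow> 'g"
    and L :: "('t, 'l) lsmod" and M :: "('t, 'm) lsmod" and N :: "('t, 'n) lsmod"
    and f :: "'l \<Rightarrow> 'm" and g :: "'m \<Rightarrow> 'n"
  assumes "bisemimodule G rs"
    and "left_semimodule L" and "left_semimodule M" and "left_semimodule N"
    and "linear_map L M f" and "linear_map M N g"
  shows
    "(exact_0LM L M f \<and> normal_map L M f \<longrightarrow>
        exact_0LM (Hom_mod G rs L) (Hom_mod G rs M) (Hom_map G f) \<and>
        normal_map (Hom_mod G rs L) (Hom_mod G rs M) (Hom_map G f)) \<and>
     (semi_exact_0LMN L M N f g \<and> normal_map L M f \<longrightarrow>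
        proper_exact_0LMN (Hom_mod G rs L) (Hom_mod G rs M) (Hom_mod G rs N)
          (Hom_map G f) (Hom_map G g) \<and>
        semi_exact_0LMN (Hom_mod G rs L) (Hom_mod G rs M) (Hom_mod G rs N)
          (Hom_map G f) (Hom_map G g) \<and>
        normal_map (Hom_mod G rs L) (Hom_mod G rs M) (Hom_map G f)) \<and>
     (exact_0LMN L M N f g \<and>
      (\<forall>(X :: ('t, 'm) lsmod) (Y :: ('t, 'n) lsmod) (h :: 'm \<Rightarrow> 'n).
         left_semimodule X \<and> left_semimodule Y \<and> linear_map X Y h \<and> k_normal X Y h \<longrightarrow>
         k_normal (Hom_mod G rs X) (Hom_mod G rs Y) (Hom_map G h)) \<longrightarrow>
        exact_0LMN (Hom_mod G rs L) (Hom_mod G rs M) (Hom_mod G rs N)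
          (Hom_map G f) (Hom_map G g))"
  proof -
  have G: "left_semimodule G" using assms(1) by (rule bis_lsm)
  note L = assms(2) and M = assms(3) and N = assms(4) and f = assms(5) and g = assms(6)
  let ?HL = "Hom_mod G rs L" and ?HM = "Hom_mod G rs M" and ?HN = "Hom_mod G rs N"
  have P1: "exact_0LM ?HL ?HM (Hom_map G f) \<and> normal_map ?HL ?HM (Hom_map G f)"
    if kn: "k_normal L M f" and K: "Ker L M f = {mzero L}" and inorm: "i_normal L M f"
  proof -
    have inj: "inj_on f (mcarrier L)" by (rule inj_from[OF L kn K])
    have hinj: "inj_on (Hom_map G f) (mcarrier ?HL)" by (rule hom_map_inj[OF inj])
    have hkn: "k_normal ?HL ?HM (Hom_map G f)"
      unfolding k_normal_def
    proof (intro ballI impI)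
      fix x x' assume a: "x \<in> mcarrier ?HL" "x' \<in> mcarrier ?HL" "Hom_map G f x = Hom_map G f x'"
      then have "x = x'" using hinj by (auto dest: inj_onD)
      moreover have "mzero ?HL \<in> Ker ?HL ?HM (Hom_map G f)"
        using hom_ker[OF G L M f K, of rs] by simp
      ultimately show "\<exists>k\<in>Ker ?HL ?HM (Hom_map G f). \<exists>k'\<in>Ker ?HL ?HM (Hom_map G f). madd ?HL x k = madd ?HL x' k'"
        by blast
    qed
    show ?thesis
      unfolding exact_0LM_def exact3_def normal_map_def zimg
      using hkn hom_ker[OF G L M f K, of rs] hom_inormal[OF G L M f inj inorm, of rs] by simp
  qed
  have P3: "exact_0LMN ?HL ?HM ?HN (Hom_map G f) (Hom_map G g)"
    if kn: "k_normal L M f" and K: "Ker L M f = {mzero L}" and ex: "f ` mcarrier L = Ker M N g"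
      and kng: "k_normal ?HM ?HN (Hom_map G g)"
  proof -
    have inj: "inj_on f (mcarrier L)" by (rule inj_from[OF L kn K])
    have hinj: "inj_on (Hom_map G f) (mcarrier ?HL)" by (rule hom_map_inj[OF inj])
    have hkn: "k_normal ?HL ?HM (Hom_map G f)"
      unfolding k_normal_def
    proof (intro ballI impI)
      fix x x' assume a: "x \<in> mcarrier ?HL" "x' \<in> mcarrier ?HL" "Hom_map G f x = Hom_map G f x'"
      then have "x = x'" using hinj by (auto dest: inj_onD)
      moreover have "mzero ?HL \<in> Ker ?HL ?HM (Hom_map G f)"
        using hom_ker[OF G L M f K, of rs] by simp
      ultimately show "\<exists>k\<in>Ker ?HL ?HM (Hom_map G f). \<exists>k'\<in>Ker ?HL ?HM (Hom_map G f). madd ?HL x k = madd ?HL x' k'"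
        by blast
    qed
    show ?thesis
      unfolding exact_0LMN_def exact3_def zimg
      using hkn kng hom_ker[OF G L M f K, of rs] hom_im_ker[OF G L M N f g inj ex, of rs] by simp
  qed
  show ?thesis
  proof (rule conjI[OF impI conjI[OF impI impI]])
    assume "exact_0LM L M f \<and> normal_map L M f"
    then show "exact_0LM ?HL ?HM (Hom_map G f) \<and> normal_map ?HL ?HM (Hom_map G f)"
      using P1 unfolding exact_0LM_def exact3_def normal_map_def zimg by simp
  next
    assume a: "semi_exact_0LMN L M N f g \<and> normal_map L M f"
    then have K: "Ker L M f = {mzero L}" and kn: "k_normal L M f" and inorm: "i_normal L M f"
      and sc: "sclosure M (f ` mcarrier L) = Ker M N g"
      unfolding semi_exact_0LMN_def semi_exact3_def normal_map_def zimg sclos_zero[OF L] by auto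
    have ex: "f ` mcarrier L = Ker M N g" using sc inorm by (simp add: i_normal_def)
    have inj: "inj_on f (mcarrier L)" by (rule inj_from[OF L kn K])
    have p1: "exact_0LM ?HL ?HM (Hom_map G f) \<and> normal_map ?HL ?HM (Hom_map G f)"
      using P1 kn K inorm by blast
    have hK: "Ker ?HL ?HM (Hom_map G f) = {mzero ?HL}" by (rule hom_ker[OF G L M f K])
    have hex: "Hom_map G f ` mcarrier ?HL = Ker ?HM ?HN (Hom_map G g)"
      by (rule hom_im_ker[OF G L M N f g inj ex])
    have hin: "i_normal ?HL ?HM (Hom_map G f)" using p1 by (simp add: normal_map_def)
    have sz: "sclosure ?HL {mzero ?HL} = {mzero ?HL}"
      using hom_add0r[OF L] hom_zero[OF G L, of rs] unfolding sclosure_def by auto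
    have h1: "proper_exact_0LMN ?HL ?HM ?HN (Hom_map G f) (Hom_map G g)"
      unfolding proper_exact_0LMN_def proper_exact3_def zimg using hK hex by simp
    have h2: "semi_exact_0LMN ?HL ?HM ?HN (Hom_map G f) (Hom_map G g)"
      unfolding semi_exact_0LMN_def semi_exact3_def zimg sz using hK hex hin
      by (simp add: i_normal_def)
    show "proper_exact_0LMN ?HL ?HM ?HN (Hom_map G f) (Hom_map G g) \<and>
        semi_exact_0LMN ?HL ?HM ?HN (Hom_map G f) (Hom_map G g) \<and>
        normal_map ?HL ?HM (Hom_map G f)" using p1 h1 h2 by simp
  next
    assume a: "exact_0LMN L M N f g \<and>
      (\<forall>(X :: ('t, 'm) lsmod) (Y :: ('t, 'n) lsmod) (h :: 'm \<Rightarrow> 'n).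
         left_semimodule X \<and> left_semimodule Y \<and> linear_map X Y h \<and> k_normal X Y h \<longrightarrow>
         k_normal (Hom_mod G rs X) (Hom_mod G rs Y) (Hom_map G h))"
    then have K: "Ker L M f = {mzero L}" and kn: "k_normal L M f" and kng0: "k_normal M N g"
      and ex: "f ` mcarrier L = Ker M N g"
      unfolding exact_0LMN_def exact3_def zimg by auto
    have kng: "k_normal ?HM ?HN (Hom_map G g)" using a M N g kng0 by blast
    show "exact_0LMN ?HL ?HM ?HN (Hom_map G f) (Hom_map G g)" by (rule P3[OF kn K ex kng])
  qed
qed

end
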